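(* In the model and protocol $\mathrm{OciorABA}$ described in the context, with $n\ge 3t+1$ and every honest node receiving an input message, if any honest node outputs a value $w$, then every honest node eventually outputs $w$.
   Context: Model: there are $n$ nodes $\mathrm{Node}_1,\dots,\mathrm{Node}_n$ in an asynchronous network (every message sent between honest nodes is eventually delivered, with arbitrary adversarial delay). An adaptive adversary may corrupt at most $t$ nodes in total; $\mathcal F\subseteq[1:n]$ denotes the set of dishonest nodes; $n\ge 3t+1$. The symbol $\bot$ denotes "missing"; for a vector $v\in\{0,1,\bot\}^n$ let $\mathcal M(v)=\{j\in[1:n]: v[j]\neq\bot\}$. Primitives used as black boxes: (RBC) For each $j\in[1:n]$ a reliable broadcast instance $\mathrm{RBC}_j$ with leader $\mathrm{Node}_j$, satisfying Consistency (two honest outputs are equal), Validity (if the leader is honest and inputs $w$, every honest node eventually outputs $w$), and Totality (if one honest node outputs a value, every honest node eventually outputs a value). (APVA) An asynchronous partial vector agreement instance: each honest $\mathrm{Node}_i$ holds an input vector $a_i\in\{0,1,\bot\}^n$, initially all $\bot$, whose entries may over time change from $\bot$ to a value in $\{0,1\}$ (and are then fixed); each node outputs at most one vector in $\{0,1,\bot\}^n$. It satisfies: Consistency (if an honest node outputs $v$, every honest node eventually outputs $v$); Validity (if an honest node outputs $v$, then for every $j$ with $v[j]\neq\bot$ some honest $\mathrm{Node}_i$ has input $a_i[j]=v[j]$, and $|\mathcal M(v)|\ge n-t$); Termination (if there is a set of at least $n-t$ positions at which all honest nodes have non-missing input entries, then every honest node eventually outputs a vector and terminates). (Erasure code) An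 $(n,t+1)$ erasure code: $\mathrm{Enc}(w)=(\mathrm{Enc}_1(w),\dots,\mathrm{Enc}_n(w))$ and $\mathrm{Dec}$ with $\mathrm{Dec}(\{\mathrm{Enc}_j(w)\}_{j\in K})=w$ for every $K\subseteq[1:n]$, $|K|=t+1$. Protocol $\mathrm{OciorABA}$, code for an honest $\mathrm{Node}_i$ with input message $w_i$: (1) Compute $(y^{(i)}_1,\dots,y^{(i)}_n)=\mathrm{Enc}(w_i)$ and input $y^{(i)}_i$ into $\mathrm{RBC}_i$ (as leader). (2) Upon delivery of $y^{(j)}_j$ from $\mathrm{RBC}_j$ (after step (1)), set $a_i[j]=1$ if $y^{(j)}_j=y^{(i)}_j$ and $a_i[j]=0$ otherwise, and pass $a_i[j]$ into APVA as the $j$-th entry of its input vector. (3) Upon APVA outputting $v$: let $S=\{j: v[j]=1\}$. If $|S|<t+1$, output a default value $\bot$ and terminate. Otherwise let $K$ be the $t+1$ smallest elements of $S$, wait for delivery of $y^{(j)}_j$ from $\mathrm{RBC}_j$ for all $j\in K$, output $\mathrm{Dec}(\{y^{(j)}_j\}_{j\in K})$ and terminate. *)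

theory Defs
  imports Main
begin

text \<open>
Nodes are 1..n; time is a global discrete event index (nat); "eventually" means
"at some later time".  Vectors in {0,1,bot}^n are functions nat => bool option
(Some True = 1, Some False = 0, None = bot), only indices 1..n are relevant.

 dlv tau i j   : value delivered by node i from RBC_j by time tau (None = not yet)
 apva tau i    : vector output by node i from APVA by time tau (None = not yet)
 w i           : input message of (honest) node i
 Enc w j       : j-th coded symbol of w;  Dec takes a partial map of symbols.
\<close>

datatype 'w outv = Default | Val 'w

definition honest :: "nat \<Rightarrow> nat set \<Rightarrow> nat set" where
  "honest n F = {1..n} - F"

definition missing_free :: "nat \<Rightarrow> (nat \<Rightarrow> bool option) \<Rightarrow> nat set" where
  "missing_free n v = {j \<in> {1..n}. v j \<noteq> None}"

definition apva_input ::
  "('w \<Rightarrow> nat \<Rightarrow> 'y) \<Rightarrow> (nat \<Rightarrow> 'w) \<Rightarrow> (nat \<Rightarrow> nat \<Rightarrow> nat \<Rightarrow> 'y option)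
   \<Rightarrow> nat \<Rightarrow> nat \<Rightarrow> nat \<Rightarrow> bool option" where
  "apva_input Enc w dlv tau i j = map_option (\<lambda>y. y = Enc (w i) j) (dlv tau i j)"

text \<open>The t+1 smallest elements of S.\<close>
definition smallest :: "nat set \<Rightarrow> nat \<Rightarrow> nat set" where
  "smallest S t = {j \<in> S. card {k \<in> S. k < j} < Suc t}"

text \<open>Output of node i by time tau according to step (3) (None = no output yet).\<close>
definition node_output ::
  "nat \<Rightarrow> nat \<Rightarrow> ((nat \<Rightarrow> 'y option) \<Rightarrow> 'w) \<Rightarrow> (nat \<Rightarrow> nat \<Rightarrow> nat \<Rightarrow> 'y option)
   \<Rightarrow> (nat \<Rightarrow> nat \<Rightarrow> (nat \<Rightarrow> bool option) option) \<Rightarrow> nat \<Rightarrow> nat \<Rightarrow> 'w outv option" where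
  "node_output n t Dec dlv apva tau i =
     (case apva tau i of
        None \<Rightarrow> None
      | Some v \<Rightarrow>
          (let S = {j \<in> {1..n}. v j = Some True} in
           if card S < Suc t then Some Default
           else (let K = smallest S t in
                 if (\<forall>j\<in>K. dlv tau i j \<noteq> None)
                 then Some (Val (Dec (\<lambda>j. if j \<in> K then dlv tau i j else None)))
                 else None)))"

text \<open>Admissible executions: model assumptions plus black-box properties of
RBC, APVA and the erasure code (all stated for honest nodes).\<close>
definition ocior_execution ::
  "nat \<Rightarrow> nat \<Rightarrow> nat set \<Rightarrow> ('w \<Rightarrow> nat \<Rightarrow> 'y) \<Rightarrow> ((nat \<Rightarrow> 'y option) \<Rightarrow> 'w)
   \<Rightarrow> (nat \<Rightarrow> 'w) \<Rightarrow> (nat \<Rightarrow> nat \<Rightarrow> nat \<Rightarrow> 'y option)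
   \<Rightarrow> (nat \<Rightarrow> nat \<Rightarrow> (nat \<Rightarrow> bool option) option) \<Rightarrow> bool" where
  "ocior_execution n t F Enc Dec w dlv apva \<longleftrightarrow>
     \<comment> \<open>model\<close>
     n \<ge> 3 * t + 1 \<and> F \<subseteq> {1..n} \<and> card F \<le> t
     \<comment> \<open>erasure code\<close>
   \<and> (\<forall>m K. K \<subseteq> {1..n} \<and> card K = t + 1 \<longrightarrow>
          Dec (\<lambda>j. if j \<in> K then Some (Enc m j) else None) = m)
     \<comment> \<open>each delivery / output happens at most once and is then fixed\<close>
   \<and> (\<forall>i\<in>honest n F. \<forall>j tau tau' y. dlv tau i j = Some y \<and> tau \<le> tau'
          \<longrightarrow> dlv tau' i j = Some y)
   \<and> (\<forall>i\<in>honest n F. \<forall>tau tau' v. apva tau i = Some v \<and> tau \<le> tau'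
          \<longrightarrow> apva tau' i = Some v)
     \<comment> \<open>RBC consistency\<close>
   \<and> (\<forall>j\<in>{1..n}. \<forall>i\<in>honest n F. \<forall>i'\<in>honest n F. \<forall>tau tau' y y'.
          dlv tau i j = Some y \<and> dlv tau' i' j = Some y' \<longrightarrow> y = y')
     \<comment> \<open>RBC validity (honest leader j inputs Enc_j(w_j) in step (1))\<close>
   \<and> (\<forall>j\<in>honest n F. \<forall>i\<in>honest n F. \<exists>tau. dlv tau i j = Some (Enc (w j) j))
     \<comment> \<open>RBC totality\<close>
   \<and> (\<forall>j\<in>{1..n}. \<forall>i\<in>honest n F. \<forall>i'\<in>honest n F. \<forall>tau.
          dlv tau i j \<noteq> None \<longrightarrow> (\<exists>tau'. dlv tau' i' j \<noteq> None))
     \<comment> \<open>APVA consistency\<close>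
   \<and> (\<forall>i\<in>honest n F. \<forall>i'\<in>honest n F. \<forall>tau v.
          apva tau i = Some v \<longrightarrow> (\<exists>tau'. apva tau' i' = Some v))
     \<comment> \<open>APVA validity\<close>
   \<and> (\<forall>i\<in>honest n F. \<forall>tau v. apva tau i = Some v \<longrightarrow>
          (\<forall>j\<in>{1..n}. v j \<noteq> None \<longrightarrow>
             (\<exists>i'\<in>honest n F. \<exists>tau'. apva_input Enc w dlv tau' i' j = v j))
          \<and> card (missing_free n v) \<ge> n - t)
     \<comment> \<open>APVA termination\<close>
   \<and> ((\<exists>P \<subseteq> {1..n}. card P \<ge> n - t \<and>
          (\<exists>tau. \<forall>i\<in>honest n F. \<forall>j\<in>P. apva_input Enc w dlv tau i j \<noteq> None))
       \<longrightarrow> (\<forall>i\<in>honest n F. \<exists>tau v. apva tau i = Some v))"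

end

theory Submission
  imports Defs
begin

lemma common_time:
  fixes T0 :: nat
  assumes "finite K"
    and "\<forall>j\<in>K. \<exists>s. P s j"
    and mono: "\<And>j s s'. j \<in> K \<Longrightarrow> P s j \<Longrightarrow> s \<le> s' \<Longrightarrow> P s' j"
  shows "\<exists>T. T \<ge> T0 \<and> (\<forall>j\<in>K. P T j)"
  using assms
proof (induction K rule: finite_induct)
  case empty
  show ?case by (intro exI[of _ T0]) simp
next
  case (insert x K)
  have IH: "\<exists>T\<ge>T0. \<forall>j\<in>K. P T j"
    using insert.IH insert.prems by blast
  then obtain T where T: "T \<ge> T0" "\<forall>j\<in>K. P T j" by blast
  from insert.prems(1) obtain s where s: "P s x" by blast
  have a: "\<forall>j\<in>K. P (max T s) j"
  proof
    fix j assume "j \<in> K"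
    then show "P (max T s) j" using insert.prems(2)[of j T "max T s"] T(2) by simp
  qed
  have b: "P (max T s) x" using insert.prems(2)[of x s "max T s"] s by simp
  show ?case using T(1) a b by (intro exI[of _ "max T s"]) simp
qed

theorem theorem6:
  fixes n t :: nat and F :: "nat set"
    and Enc :: "'w \<Rightarrow> nat \<Rightarrow> 'y" and Dec :: "(nat \<Rightarrow> 'y option) \<Rightarrow> 'w"
    and w :: "nat \<Rightarrow> 'w"
    and dlv :: "nat \<Rightarrow> nat \<Rightarrow> nat \<Rightarrow> 'y option"
    and apva :: "nat \<Rightarrow> nat \<Rightarrow> (nat \<Rightarrow> bool option) option"
  assumes "ocior_execution n t F Enc Dec w dlv apva"
    and "i \<in> honest n F"
    and "node_output n t Dec dlv apva tau i = Some out"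
    and "i' \<in> honest n F"
  shows "\<exists>tau'. node_output n t Dec dlv apva tau' i' = Some out"
proof -
  note E = assms(1)[unfolded ocior_execution_def]
  note C5 = E[THEN conjunct2, THEN conjunct2, THEN conjunct2, THEN conjunct2, THEN conjunct1]
  note C6 = E[THEN conjunct2, THEN conjunct2, THEN conjunct2, THEN conjunct2, THEN conjunct2, THEN conjunct1]
  note C7 = E[THEN conjunct2, THEN conjunct2, THEN conjunct2, THEN conjunct2, THEN conjunct2, THEN conjunct2, THEN conjunct1]
  note C9 = E[THEN conjunct2, THEN conjunct2, THEN conjunct2, THEN conjunct2, THEN conjunct2, THEN conjunct2, THEN conjunct2, THEN conjunct2, THEN conjunct1]
  note C10 = E[THEN conjunct2, THEN conjunct2, THEN conjunct2, THEN conjunct2, THEN conjunct2, THEN conjunct2, THEN conjunct2, THEN conjunct2, THEN conjunct2, THEN conjunct1]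
  have dmono: "\<And>j s s' y. dlv s i' j = Some y \<Longrightarrow> s \<le> s' \<Longrightarrow> dlv s' i' j = Some y"
    using C5 assms(4) by blast
  have amono: "\<And>s s' v. apva s i' = Some v \<Longrightarrow> s \<le> s' \<Longrightarrow> apva s' i' = Some v"
    using C6 assms(4) by blast
  have cons: "\<And>j s s' y y'. j \<in> {1..n} \<Longrightarrow> dlv s i j = Some y \<Longrightarrow> dlv s' i' j = Some y' \<Longrightarrow> y = y'"
    using C7 assms(2,4) by blast
  have tot: "\<And>j s. j \<in> {1..n} \<Longrightarrow> dlv s i j \<noteq> None \<Longrightarrow> \<exists>s'. dlv s' i' j \<noteq> None"
    using C9 assms(2,4) by blast
  obtain v where v: "apva tau i = Some v"
    using assms(3) by (cases "apva tau i") (auto simp: node_output_def)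
  then obtain tau1 where tau1: "apva tau1 i' = Some v"
    using C10 assms(2,4) by blast
  define S where "S = {j \<in> {1..n}. v j = Some True}"
  show ?thesis
  proof (cases "card S < Suc t")
    case True
    then show ?thesis using assms(3) v tau1
      by (intro exI[of _ tau1]) (simp add: node_output_def S_def Let_def)
  next
    case False
    define K where "K = smallest S t"
    have KS: "K \<subseteq> {1..n}" unfolding K_def smallest_def S_def by auto
    have fin: "finite K" using KS finite_subset by blast
    have all: "\<forall>j\<in>K. dlv tau i j \<noteq> None"
      and out: "out = Val (Dec (\<lambda>j. if j \<in> K then dlv tau i j else None))"
      using assms(3) v False
      by (auto simp: node_output_def S_def K_def Let_def split: if_splits)
    have "\<exists>T. T \<ge> tau1 \<and> (\<forall>j\<in>K. dlv T i' j \<noteq> None)"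
    proof (rule common_time[OF fin])
      show "\<forall>j\<in>K. \<exists>s. dlv s i' j \<noteq> None" using all tot KS by blast
      show "\<And>j s s'. j \<in> K \<Longrightarrow> dlv s i' j \<noteq> None \<Longrightarrow> s \<le> s' \<Longrightarrow> dlv s' i' j \<noteq> None"
        using dmono by blast
    qed
    then obtain T where T: "T \<ge> tau1" "\<forall>j\<in>K. dlv T i' j \<noteq> None" by blast
    have aT: "apva T i' = Some v" using amono tau1 T(1) by blast
    have eq: "(\<lambda>j. if j \<in> K then dlv T i' j else None) = (\<lambda>j. if j \<in> K then dlv tau i j else None)"
    proof
      fix j show "(if j \<in> K then dlv T i' j else None) = (if j \<in> K then dlv tau i j else None)"
      proof (cases "j \<in> K")
        case True
        then obtain y y' where "dlv tau i j = Some y" "dlv T i' j = Some y'"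
          using all T(2) by blast
        then show ?thesis using cons[of j tau y T y'] True KS by (metis subsetD)
      qed simp
    qed
    have "node_output n t Dec dlv apva T i' = Some (Val (Dec (\<lambda>j. if j \<in> K then dlv T i' j else None)))"
      unfolding node_output_def aT Let_def option.case S_def[symmetric] K_def[symmetric]
      using False T(2) by simp
    then show ?thesis using eq out by auto
  qed
qed

end
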